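(* Let $\widetilde X$ be a pure $d$-multicomplex. The following are equivalent: (1) $\widetilde X$ is link-connected; (2) for every $-1\le j\le d-2$ and every $j$-multicell $\mathfrak a$ of $\widetilde X$ (for $j=-1$, $\mathfrak a$ is the empty multicell), any two $d$-multicells containing $\mathfrak a$ can be joined by a finite sequence of $d$-multicells, each containing $\mathfrak a$, such that any two consecutive ones contain a common $(d-1)$-multicell which itself contains $\mathfrak a$ (i.e. the link of $\mathfrak a$ is $(d-j-1)$-lower path connected).
   Context: A $d$-multicomplex is a triple $\widetilde X=(X,\mathsf m,\mathsf g)$: $X$ is a $d$-dimensional simplicial complex on a countable vertex set; $\mathsf m:X\to\mathbb N$ is a multiplicity function equal to $1$ on the empty cell and on vertices; the multicells are the pairs $(\tau,r)$ with $\tau\in X$, $1\le r\le \mathsf m(\tau)$, of dimension $\dim\tau$; and $\mathsf g$ assigns to every multicell $(\tau,r)$ and every codimension-one face $\sigma$ of $\tau$ a multicell $\mathsf g((\tau,r),\sigma)=(\sigma,s)$ (the copy of $\sigma$ glued to the boundary of $(\tau,r)$). Containment $\preceq$ is the reflexive–transitive closure of the relation "$\mathfrak b=\mathsf g(\mathfrak a,\sigma)$ for some $\sigma$". Consistency is required: if $\mathfrak b=(\sigma,s)$, $\mathfrak b'=(\sigma',s')$ are multicells of equal dimension contained in a common multicell and $\rho=\sigma\cap\sigma'$ has codimension one in both, then $\mathsf g(\mathfrak b,\rho)=\mathsf g(\mathfrak b',\rho)$. $\widetilde X$ is pure if every multicell is contained in some $d$-multicell. For a multicell $\mathfrak a$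 of dimension $j\le d-2$, the $1$-skeleton of its link is the multigraph whose vertices are the $(j+1)$-multicells containing $\mathfrak a$ and whose edges are the $(j+2)$-multicells containing $\mathfrak a$, each joining the two $(j+1)$-multicells containing $\mathfrak a$ that it contains. $\widetilde X$ is link-connected if for every multicell $\mathfrak a$ of dimension at most $d-2$ (including the empty multicell) this multigraph is connected. *)

theory Defs
  imports Main "HOL-Library.Countable_Set"
begin

text \<open>Cells are finite vertex sets; a cell \<tau> has dimension card \<tau> - 1.
  A multicell is a pair (\<tau>, r) with \<tau> in X and 1 \<le> r \<le> m \<tau>.\<close>

type_synonym 'v mcell = "'v set \<times> nat"

definition is_multicell :: "'v set set \<Rightarrow> ('v set \<Rightarrow> nat) \<Rightarrow> 'v mcell \<Rightarrow> bool" where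
  "is_multicell X m a \<longleftrightarrow> fst a \<in> X \<and> 1 \<le> snd a \<and> snd a \<le> m (fst a)"

definition codim1_face :: "'v set \<Rightarrow> 'v set \<Rightarrow> bool" where
  "codim1_face \<sigma> \<tau> \<longleftrightarrow> \<sigma> \<subseteq> \<tau> \<and> card \<sigma> + 1 = card \<tau>"

definition glue_step :: "'v set set \<Rightarrow> ('v set \<Rightarrow> nat) \<Rightarrow> ('v mcell \<Rightarrow> 'v set \<Rightarrow> 'v mcell)
    \<Rightarrow> 'v mcell \<Rightarrow> 'v mcell \<Rightarrow> bool" where
  "glue_step X m g a b \<longleftrightarrow> is_multicell X m a \<and> (\<exists>\<sigma>. codim1_face \<sigma> (fst a) \<and> b = g a \<sigma>)"

text \<open>contained X m g b a: the multicell b is contained in a (b \<preceq> a), the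
  reflexive-transitive closure of the gluing relation.\<close>
definition contained :: "'v set set \<Rightarrow> ('v set \<Rightarrow> nat) \<Rightarrow> ('v mcell \<Rightarrow> 'v set \<Rightarrow> 'v mcell)
    \<Rightarrow> 'v mcell \<Rightarrow> 'v mcell \<Rightarrow> bool" where
  "contained X m g b a \<longleftrightarrow> (glue_step X m g)\<^sup>*\<^sup>* a b"

definition simplicial_complex :: "nat \<Rightarrow> 'v set set \<Rightarrow> bool" where
  "simplicial_complex d X \<longleftrightarrow>
     countable (\<Union>X) \<and>
     {} \<in> X \<and>
     (\<forall>\<tau>\<in>X. finite \<tau> \<and> card \<tau> \<le> d + 1) \<and>
     (\<forall>\<tau>\<in>X. \<forall>\<sigma>. \<sigma> \<subseteq> \<tau> \<longrightarrow> \<sigma> \<in> X) \<and>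
     (\<exists>\<tau>\<in>X. card \<tau> = d + 1)"

definition multicomplex :: "nat \<Rightarrow> 'v set set \<Rightarrow> ('v set \<Rightarrow> nat)
    \<Rightarrow> ('v mcell \<Rightarrow> 'v set \<Rightarrow> 'v mcell) \<Rightarrow> bool" where
  "multicomplex d X m g \<longleftrightarrow>
     simplicial_complex d X \<and>
     (\<forall>\<tau>\<in>X. 1 \<le> m \<tau>) \<and>
     m {} = 1 \<and> (\<forall>v. {v} \<in> X \<longrightarrow> m {v} = 1) \<and>
     (\<forall>a \<sigma>. is_multicell X m a \<and> codim1_face \<sigma> (fst a) \<longrightarrow>
        is_multicell X m (g a \<sigma>) \<and> fst (g a \<sigma>) = \<sigma>) \<and>
     (\<forall>b b' c. is_multicell X m b \<and> is_multicell X m b' \<and> is_multicell X m c \<and>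
        card (fst b) = card (fst b') \<and>
        contained X m g b c \<and> contained X m g b' c \<and>
        codim1_face (fst b \<inter> fst b') (fst b) \<and> codim1_face (fst b \<inter> fst b') (fst b')
        \<longrightarrow> g b (fst b \<inter> fst b') = g b' (fst b \<inter> fst b'))"

definition pure :: "nat \<Rightarrow> 'v set set \<Rightarrow> ('v set \<Rightarrow> nat)
    \<Rightarrow> ('v mcell \<Rightarrow> 'v set \<Rightarrow> 'v mcell) \<Rightarrow> bool" where
  "pure d X m g \<longleftrightarrow>
     (\<forall>a. is_multicell X m a \<longrightarrow>
        (\<exists>c. is_multicell X m c \<and> card (fst c) = d + 1 \<and> contained X m g a c))"

text \<open>Adjacency in the 1-skeleton of the link of a: two (j+1)-multicells containing a
  are joined by an edge iff some (j+2)-multicell containing a contains both.\<close>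
definition link_vertex :: "'v set set \<Rightarrow> ('v set \<Rightarrow> nat)
    \<Rightarrow> ('v mcell \<Rightarrow> 'v set \<Rightarrow> 'v mcell) \<Rightarrow> 'v mcell \<Rightarrow> 'v mcell \<Rightarrow> bool" where
  "link_vertex X m g a u \<longleftrightarrow>
     is_multicell X m u \<and> card (fst u) = card (fst a) + 1 \<and> contained X m g a u"

definition link_adj :: "'v set set \<Rightarrow> ('v set \<Rightarrow> nat)
    \<Rightarrow> ('v mcell \<Rightarrow> 'v set \<Rightarrow> 'v mcell) \<Rightarrow> 'v mcell \<Rightarrow> 'v mcell \<Rightarrow> 'v mcell \<Rightarrow> bool" where
  "link_adj X m g a u w \<longleftrightarrow>
     link_vertex X m g a u \<and> link_vertex X m g a w \<and>
     (\<exists>e. is_multicell X m e \<and> card (fst e) = card (fst a) + 2 \<and> contained X m g a e \<and>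
          contained X m g u e \<and> contained X m g w e)"

definition link_connected :: "nat \<Rightarrow> 'v set set \<Rightarrow> ('v set \<Rightarrow> nat)
    \<Rightarrow> ('v mcell \<Rightarrow> 'v set \<Rightarrow> 'v mcell) \<Rightarrow> bool" where
  "link_connected d X m g \<longleftrightarrow>
     (\<forall>a. is_multicell X m a \<and> card (fst a) + 1 \<le> d \<longrightarrow>
        (\<forall>u w. link_vertex X m g a u \<and> link_vertex X m g a w \<longrightarrow>
           (link_adj X m g a)\<^sup>*\<^sup>* u w))"

definition lower_adj :: "nat \<Rightarrow> 'v set set \<Rightarrow> ('v set \<Rightarrow> nat)
    \<Rightarrow> ('v mcell \<Rightarrow> 'v set \<Rightarrow> 'v mcell) \<Rightarrow> 'v mcell \<Rightarrow> 'v mcell \<Rightarrow> 'v mcell \<Rightarrow> bool" where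
  "lower_adj d X m g a P Q \<longleftrightarrow>
     is_multicell X m P \<and> card (fst P) = d + 1 \<and> contained X m g a P \<and>
     is_multicell X m Q \<and> card (fst Q) = d + 1 \<and> contained X m g a Q \<and>
     (\<exists>c. is_multicell X m c \<and> card (fst c) = d \<and> contained X m g a c \<and>
          contained X m g c P \<and> contained X m g c Q)"

definition lower_path_connected_links :: "nat \<Rightarrow> 'v set set \<Rightarrow> ('v set \<Rightarrow> nat)
    \<Rightarrow> ('v mcell \<Rightarrow> 'v set \<Rightarrow> 'v mcell) \<Rightarrow> bool" where
  "lower_path_connected_links d X m g \<longleftrightarrow>
     (\<forall>a. is_multicell X m a \<and> card (fst a) + 1 \<le> d \<longrightarrow>
        (\<forall>P Q. is_multicell X m P \<and> card (fst P) = d + 1 \<and> contained X m g a P \<and>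
               is_multicell X m Q \<and> card (fst Q) = d + 1 \<and> contained X m g a Q \<longrightarrow>
           (lower_adj d X m g a)\<^sup>*\<^sup>* P Q))"

end

theory Submission
  imports Defs
begin

lemma rtp_last: "r\<^sup>*\<^sup>* a b \<Longrightarrow> a \<noteq> b \<Longrightarrow> \<exists>y. r\<^sup>*\<^sup>* a y \<and> r y b"
  by (induction rule: rtranclp_induct) auto

locale mcx =
  fixes d :: nat and X :: "'v set set" and m :: "'v set \<Rightarrow> nat"
    and g :: "'v set \<times> nat \<Rightarrow> 'v set \<Rightarrow> 'v set \<times> nat"
  assumes mc: "multicomplex d X m g" and pu: "pure d X m g"
begin

abbreviation "MC \<equiv> is_multicell X m"
abbreviation "CT \<equiv> contained X m g"

lemma mc_finite: "MC a \<Longrightarrow> finite (fst a)"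
proof -
  assume "MC a"
  then have "fst a \<in> X" unfolding is_multicell_def by blast
  moreover have "simplicial_complex d X" using mc unfolding multicomplex_def by (elim conjE)
  then have "\<forall>\<tau>\<in>X. finite \<tau> \<and> card \<tau> \<le> d + 1" unfolding simplicial_complex_def by (elim conjE)
  ultimately show "finite (fst a)" by blast
qed

lemma g_props: "MC a \<Longrightarrow> codim1_face \<sigma> (fst a) \<Longrightarrow> MC (g a \<sigma>) \<and> fst (g a \<sigma>) = \<sigma>"
proof -
  have "\<forall>a \<sigma>. MC a \<and> codim1_face \<sigma> (fst a) \<longrightarrow> MC (g a \<sigma>) \<and> fst (g a \<sigma>) = \<sigma>"
    using mc unfolding multicomplex_def by (elim conjE) assumption
  then show "MC a \<Longrightarrow> codim1_face \<sigma> (fst a) \<Longrightarrow> MC (g a \<sigma>) \<and> fst (g a \<sigma>) = \<sigma>" by blast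
qed

lemma cons_prop: "\<forall>b b' c. MC b \<and> MC b' \<and> MC c \<and>
        card (fst b) = card (fst b') \<and> CT b c \<and> CT b' c \<and>
        codim1_face (fst b \<inter> fst b') (fst b) \<and> codim1_face (fst b \<inter> fst b') (fst b')
        \<longrightarrow> g b (fst b \<inter> fst b') = g b' (fst b \<inter> fst b')"
  using mc unfolding multicomplex_def by (elim conjE) assumption

lemma glue_props:
  assumes "glue_step X m g a b"
  shows "MC b \<and> fst b \<subseteq> fst a \<and> card (fst b) + 1 = card (fst a)"
proof -
  from assms obtain \<sigma> where a: "MC a" and s: "codim1_face \<sigma> (fst a)" and b: "b = g a \<sigma>"
    unfolding glue_step_def by blast
  have "MC (g a \<sigma>) \<and> fst (g a \<sigma>) = \<sigma>" using g_props a s by blast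
  then show ?thesis using s b unfolding codim1_face_def by auto
qed

lemma ct_props:
  assumes "CT b a" "MC a"
  shows "MC b \<and> fst b \<subseteq> fst a \<and> (b = a \<or> card (fst b) < card (fst a))"
proof -
  have "(glue_step X m g)\<^sup>*\<^sup>* a b" using assms(1) unfolding contained_def .
  then show ?thesis
  proof (induction rule: rtranclp_induct)
    case base then show ?case using assms(2) by simp
  next
    case (step y z)
    then show ?case using glue_props[OF step(2)] by auto
  qed
qed

lemma ct_trans: "CT a b \<Longrightarrow> CT b c \<Longrightarrow> CT a c"
  unfolding contained_def by auto

lemma ct_refl: "CT a a"
  unfolding contained_def by auto

lemma pred_exists:
  assumes "CT a P" "MC P" "card (fst a) < card (fst P)"
  shows "\<exists>u. MC u \<and> card (fst u) = card (fst a) + 1 \<and> CT a u \<and> CT u P"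
proof -
  have "(glue_step X m g)\<^sup>*\<^sup>* P a" using assms(1) unfolding contained_def .
  moreover have "P \<noteq> a" using assms(3) by auto
  ultimately have "\<exists>y. (glue_step X m g)\<^sup>*\<^sup>* P y \<and> glue_step X m g y a" by (rule rtp_last)
  then obtain y where y: "(glue_step X m g)\<^sup>*\<^sup>* P y" "glue_step X m g y a" by blast
  have "CT y P" using y(1) unfolding contained_def .
  moreover have "CT a y" using y(2) unfolding contained_def by auto
  moreover have "MC y" using glue_step_def y(2) by blast
  moreover have "card (fst y) = card (fst a) + 1" using glue_props[OF y(2)] by simp
  ultimately show ?thesis by blast
qed

lemma face_exists:
  "MC c \<Longrightarrow> \<sigma> \<subseteq> fst c \<Longrightarrow> \<exists>b. CT b c \<and> fst b = \<sigma>"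
proof (induction "card (fst c) - card \<sigma>" arbitrary: c)
  case 0
  have "card (fst c) \<le> card \<sigma>" using 0(1) by simp
  then have "\<sigma> = fst c" using card_seteq[OF mc_finite[OF 0(2)] 0(3)] by simp
  then show ?case using ct_refl by blast
next
  case (Suc n)
  then have "\<sigma> \<noteq> fst c" by auto
  then obtain x where x: "x \<in> fst c" "x \<notin> \<sigma>" using Suc by blast
  have fin: "finite (fst c)" using mc_finite[OF Suc(3)] .
  let ?s = "fst c - {x}"
  have cp: "card (fst c) > 0" using x fin card_gt_0_iff by blast
  have cf: "codim1_face ?s (fst c)" unfolding codim1_face_def using x fin cp
    by (simp add: card_Diff_singleton)
  have gs: "glue_step X m g c (g c ?s)" unfolding glue_step_def using Suc(3) cf by blast
  have gp: "MC (g c ?s) \<and> fst (g c ?s) = ?s" using g_props[OF Suc(3) cf] .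
  have n1: "n = card (fst (g c ?s)) - card \<sigma>" using Suc(2) x fin gp by (simp add: card_Diff_singleton)
  have s1: "\<sigma> \<subseteq> fst (g c ?s)" using Suc(4) x gp by auto
  have "\<exists>b. CT b (g c ?s) \<and> fst b = \<sigma>" using Suc(1)[OF n1 conjunct1[OF gp] s1] .
  then obtain b where "CT b (g c ?s)" "fst b = \<sigma>" by blast
  moreover have "CT (g c ?s) c" unfolding contained_def using gs by auto
  ultimately show ?case using ct_trans by blast
qed

lemma int_lemma:
  assumes "finite B1" "finite B2" "A \<subseteq> B1" "A \<subseteq> B2" "card A + 1 = card B1" "card A + 1 = card B2"
    "B1 \<noteq> B2"
  shows "B1 \<inter> B2 = A"
proof -
  have f: "finite A" using assms(1,3) finite_subset by blast
  have "B1 \<inter> B2 \<noteq> B1"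
  proof
    assume "B1 \<inter> B2 = B1"
    then have "B1 \<subseteq> B2" by blast
    then have "B1 = B2" using card_seteq[OF assms(2) \<open>B1 \<subseteq> B2\<close>] assms(5,6) by simp
    then show False using assms(7) by simp
  qed
  then have "B1 \<inter> B2 \<subset> B1" by blast
  then have "card (B1 \<inter> B2) < card B1" using psubset_card_mono[OF assms(1)] by blast
  then have "card (B1 \<inter> B2) \<le> card A" using assms(5) by simp
  moreover have "A \<subseteq> B1 \<inter> B2" using assms by blast
  moreover have "finite (B1 \<inter> B2)" using assms(1) by simp
  ultimately have "A = B1 \<inter> B2" using card_seteq[of "B1 \<inter> B2" A] by blast
  then show ?thesis by simp
qed

lemma face_unique_aux:
  "MC c \<Longrightarrow> CT b c \<Longrightarrow> CT b' c \<Longrightarrow> fst b = fst b' \<Longrightarrow> card (fst c) - card (fst b) = n \<Longrightarrow> b = b'"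
proof (induction n arbitrary: b b')
  case 0
  have "b = c" using ct_props[OF 0(2,1)] 0(5) by auto
  moreover have "b' = c" using ct_props[OF 0(3,1)] 0(4,5) by auto
  ultimately show ?case by simp
next
  case (Suc n)
  have nb: "b \<noteq> c" using Suc.prems(5) by auto
  have nb': "b' \<noteq> c" using Suc.prems(4,5) by auto
  have "(glue_step X m g)\<^sup>*\<^sup>* c b" using Suc.prems(2) unfolding contained_def .
  moreover have "c \<noteq> b" using nb by auto
  ultimately have "\<exists>y. (glue_step X m g)\<^sup>*\<^sup>* c y \<and> glue_step X m g y b" by (rule rtp_last)
  then obtain b1 where b1: "CT b1 c" "glue_step X m g b1 b"
    unfolding contained_def by blast
  have "(glue_step X m g)\<^sup>*\<^sup>* c b'" using Suc.prems(3) unfolding contained_def .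
  moreover have "c \<noteq> b'" using nb' by auto
  ultimately have "\<exists>y. (glue_step X m g)\<^sup>*\<^sup>* c y \<and> glue_step X m g y b'" by (rule rtp_last)
  then obtain b1' where b1': "CT b1' c" "glue_step X m g b1' b'"
    unfolding contained_def by blast
  have p1: "MC b1 \<and> fst b1 \<subseteq> fst c" using ct_props[OF b1(1) Suc.prems(1)] by blast
  have p1': "MC b1' \<and> fst b1' \<subseteq> fst c" using ct_props[OF b1'(1) Suc.prems(1)] by blast
  from b1(2) obtain \<sigma> where s: "codim1_face \<sigma> (fst b1)" "b = g b1 \<sigma>" unfolding glue_step_def by blast
  from b1'(2) obtain \<sigma>' where s': "codim1_face \<sigma>' (fst b1')" "b' = g b1' \<sigma>'" unfolding glue_step_def by blast
  have "fst (g b1 \<sigma>) = \<sigma>" using g_props p1 s by blast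
  then have sb: "\<sigma> = fst b" using s by simp
  have "fst (g b1' \<sigma>') = \<sigma>'" using g_props p1' s' by blast
  then have sb': "\<sigma>' = fst b" using s' Suc.prems(4) by simp
  have cb1: "card (fst b1) = card (fst b) + 1" using s(1) sb unfolding codim1_face_def by simp
  have cb1': "card (fst b1') = card (fst b) + 1" using s'(1) sb' unfolding codim1_face_def by simp
  show ?case
  proof (cases "fst b1 = fst b1'")
    case True
    have "card (fst c) - card (fst b1) = n" using Suc.prems(5) cb1 by simp
    then have bb: "b1 = b1'" using Suc.IH[OF Suc.prems(1) b1(1) b1'(1) True] by blast
    have "b = g b1 (fst b)" using s(2) unfolding sb .
    also have "\<dots> = g b1' (fst b)" using bb by simp
    also have "\<dots> = b'" using s'(2) unfolding sb' by simp
    finally show ?thesis .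
  next
    case False
    have sub: "fst b \<subseteq> fst b1" "fst b \<subseteq> fst b1'" using s(1) sb s'(1) sb' unfolding codim1_face_def by auto
    have ii: "fst b1 \<inter> fst b1' = fst b"
      using int_lemma[OF mc_finite[OF conjunct1[OF p1]] mc_finite[OF conjunct1[OF p1']] sub] cb1 cb1' False
      by simp
    have cf1: "codim1_face (fst b1 \<inter> fst b1') (fst b1)" using ii s(1) sb by simp
    have cf2: "codim1_face (fst b1 \<inter> fst b1') (fst b1')" using ii s'(1) sb' by simp
    note cons = cons_prop
    have "g b1 (fst b1 \<inter> fst b1') = g b1' (fst b1 \<inter> fst b1')"
      apply (rule cons[rule_format, of b1 b1' c])
      using p1 p1' cb1 cb1' b1(1) b1'(1) Suc.prems(1) cf1 cf2 by simp
    then have "g b1 (fst b) = g b1' (fst b)" using ii by simp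
    have "b = g b1 (fst b)" using s(2) unfolding sb .
    also have "\<dots> = g b1' (fst b)" by fact
    also have "\<dots> = b'" using s'(2) unfolding sb' by simp
    finally show ?thesis .
  qed
qed

lemma face_unique: "MC c \<Longrightarrow> CT b c \<Longrightarrow> CT b' c \<Longrightarrow> fst b = fst b' \<Longrightarrow> b = b'"
  using face_unique_aux by blast

lemma within:
  assumes P: "MC P" "CT a P" and u: "link_vertex X m g a u" "CT u P"
    and w: "link_vertex X m g a w" "CT w P" and a: "MC a"
  shows "(link_adj X m g a)\<^sup>*\<^sup>* u w"
proof (cases "fst u = fst w")
  case True
  then show ?thesis using face_unique[OF P(1) u(2) w(2)] by simp
next
  case False
  have pu: "MC u" "card (fst u) = card (fst a) + 1" "CT a u" using u(1) unfolding link_vertex_def by auto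
  have pw: "MC w" "card (fst w) = card (fst a) + 1" "CT a w" using w(1) unfolding link_vertex_def by auto
  have fu: "finite (fst u)" "finite (fst w)" using mc_finite[OF pu(1)] mc_finite[OF pw(1)] by auto
  have su: "fst a \<subseteq> fst u" "fst a \<subseteq> fst w" using ct_props[OF pu(3) pu(1)] ct_props[OF pw(3) pw(1)] by auto
  have ii: "fst u \<inter> fst w = fst a"
    using int_lemma[OF fu su] pu pw False by simp
  have cu: "card (fst u \<union> fst w) = card (fst a) + 2"
    using card_Un_Int[OF fu] ii pu pw by simp
  have "fst u \<union> fst w \<subseteq> fst P" using ct_props[OF u(2) P(1)] ct_props[OF w(2) P(1)] by blast
  then obtain e where e: "CT e P" "fst e = fst u \<union> fst w" using face_exists[OF P(1)] by blast
  have me: "MC e" using ct_props[OF e(1) P(1)] by blast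
  have "\<exists>u0. CT u0 e \<and> fst u0 = fst u" using face_exists[OF me, of "fst u"] e(2) by blast
  then obtain u0 where "CT u0 e" "fst u0 = fst u" by blast
  then have "u0 = u" using face_unique[OF P(1) ct_trans[OF _ e(1)] u(2)] by blast
  then have ue: "CT u e" using \<open>CT u0 e\<close> by simp
  have "\<exists>u0. CT u0 e \<and> fst u0 = fst w" using face_exists[OF me, of "fst w"] e(2) by blast
  then obtain w0 where "CT w0 e" "fst w0 = fst w" by blast
  then have "w0 = w" using face_unique[OF P(1) ct_trans[OF _ e(1)] w(2)] by blast
  then have we: "CT w e" using \<open>CT w0 e\<close> by simp
  have ae: "CT a e" using ct_trans[OF pu(3) ue] .
  have "link_adj X m g a u w" unfolding link_adj_def
    apply (intro conjI u(1) w(1))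
    apply (rule exI[of _ e])
    using me e(2) cu ae ue we by auto
  then show ?thesis by (rule r_into_rtranclp)
qed

lemma dir2:
  assumes "lower_path_connected_links d X m g"
  shows "link_connected d X m g"
  unfolding link_connected_def
proof (intro allI impI, elim conjE)
  fix a u w
  assume a: "MC a" "card (fst a) + 1 \<le> d" and u: "link_vertex X m g a u" and w: "link_vertex X m g a w"
  have "\<And>P Q. (lower_adj d X m g a)\<^sup>*\<^sup>* P Q \<Longrightarrow> MC P \<Longrightarrow>
     \<forall>u w. link_vertex X m g a u \<and> CT u P \<and> link_vertex X m g a w \<and> CT w Q \<longrightarrow>
       (link_adj X m g a)\<^sup>*\<^sup>* u w"
  proof -
    fix P Q
    assume "(lower_adj d X m g a)\<^sup>*\<^sup>* P Q" "MC P"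
    then show "\<forall>u w. link_vertex X m g a u \<and> CT u P \<and> link_vertex X m g a w \<and> CT w Q \<longrightarrow>
       (link_adj X m g a)\<^sup>*\<^sup>* u w"
    proof (induction rule: rtranclp_induct)
      case base
      show ?case
      proof (intro allI impI, elim conjE)
        fix u w assume h: "link_vertex X m g a u" "CT u P" "link_vertex X m g a w" "CT w P"
        have "CT a P" using ct_trans[OF _ h(2), of a] h(1) unfolding link_vertex_def by blast
        then show "(link_adj X m g a)\<^sup>*\<^sup>* u w" using within base h a by blast
      qed
    next
      case (step Q' Q)
      obtain c where c: "MC c" "card (fst c) = d" "CT a c" "CT c Q'" "CT c Q"
        using step(2) unfolding lower_adj_def by blast
      have mQ: "MC Q" "CT a Q" using step(2) unfolding lower_adj_def by auto
      obtain v where v: "MC v" "card (fst v) = card (fst a) + 1" "CT a v" "CT v c"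
        using pred_exists[OF c(3) c(1)] c(2) a(2) by auto
      have lv: "link_vertex X m g a v" unfolding link_vertex_def using v by simp
      show ?case
      proof (intro allI impI, elim conjE)
        fix u w assume h: "link_vertex X m g a u" "CT u P" "link_vertex X m g a w" "CT w Q"
        have 1: "(link_adj X m g a)\<^sup>*\<^sup>* u v" using step(3)[OF \<open>MC P\<close>] h(1,2) lv ct_trans[OF v(4) c(4)] by blast
        have 2: "(link_adj X m g a)\<^sup>*\<^sup>* v w"
          using within[OF mQ lv ct_trans[OF v(4) c(5)] h(3,4) a(1)] .
        show "(link_adj X m g a)\<^sup>*\<^sup>* u w" using 1 2 by simp
      qed
    qed
  qed
  note key = this
  obtain P where P: "MC P" "card (fst P) = d + 1" "CT u P"
    using pu u unfolding pure_def link_vertex_def by blast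
  obtain Q where Q: "MC Q" "card (fst Q) = d + 1" "CT w Q"
    using pu w unfolding pure_def link_vertex_def by blast
  have aP: "CT a P" "CT a Q" using ct_trans[OF _ P(3), of a] ct_trans[OF _ Q(3), of a] u w
    unfolding link_vertex_def by blast+
  have "(lower_adj d X m g a)\<^sup>*\<^sup>* P Q"
    using assms a P Q aP unfolding lower_path_connected_links_def by blast
  then show "(link_adj X m g a)\<^sup>*\<^sup>* u w" using key P u w Q by blast
qed

lemma lower_mono:
  assumes "CT a u" "lower_adj d X m g u P Q"
  shows "lower_adj d X m g a P Q"
  using assms ct_trans unfolding lower_adj_def by blast

lemma lower_mono_star:
  assumes "CT a u" "(lower_adj d X m g u)\<^sup>*\<^sup>* P Q"
  shows "(lower_adj d X m g a)\<^sup>*\<^sup>* P Q"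
  using assms(2) by (induction rule: rtranclp_induct)
    (auto intro: rtranclp.rtrancl_into_rtrancl lower_mono[OF assms(1)])

lemma dir1_aux:
  assumes lc: "link_connected d X m g"
  shows "\<And>a. MC a \<Longrightarrow> card (fst a) \<le> d \<Longrightarrow> d - card (fst a) = k \<Longrightarrow>
     \<forall>P Q. MC P \<and> card (fst P) = d + 1 \<and> CT a P \<and> MC Q \<and> card (fst Q) = d + 1 \<and> CT a Q \<longrightarrow>
       (lower_adj d X m g a)\<^sup>*\<^sup>* P Q"
proof (induction k)
  case 0
  then have "card (fst a) = d" by simp
  then show ?case using 0 ct_refl unfolding lower_adj_def by blast
next
  case (Suc k)
  note a = Suc.prems
  show ?case
  proof (intro allI impI, elim conjE)
    fix P Q assume P: "MC P" "card (fst P) = d + 1" "CT a P" and Q: "MC Q" "card (fst Q) = d + 1" "CT a Q"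
    obtain u where u: "MC u" "card (fst u) = card (fst a) + 1" "CT a u" "CT u P"
      using pred_exists[OF P(3) P(1)] P(2) a(2) by auto
    obtain w where w: "MC w" "card (fst w) = card (fst a) + 1" "CT a w" "CT w Q"
      using pred_exists[OF Q(3) Q(1)] Q(2) a(2) by auto
    have lu: "link_vertex X m g a u" "link_vertex X m g a w" unfolding link_vertex_def using u w by auto
    have IHu: "\<And>v R S. link_vertex X m g a v \<Longrightarrow> MC R \<Longrightarrow> card (fst R) = d + 1 \<Longrightarrow> CT v R
       \<Longrightarrow> MC S \<Longrightarrow> card (fst S) = d + 1 \<Longrightarrow> CT v S \<Longrightarrow> (lower_adj d X m g a)\<^sup>*\<^sup>* R S"
    proof -
      fix v R S assume h: "link_vertex X m g a v" "MC R" "card (fst R) = d + 1" "CT v R"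
         "MC S" "card (fst S) = d + 1" "CT v S"
      have v: "MC v" "card (fst v) = card (fst a) + 1" "CT a v" using h(1) unfolding link_vertex_def by auto
      have c1: "card (fst v) \<le> d" "d - card (fst v) = k" using v(2) a(3) by auto
      have "(lower_adj d X m g v)\<^sup>*\<^sup>* R S"
        using Suc.IH[OF v(1) c1] h by blast
      then show "(lower_adj d X m g a)\<^sup>*\<^sup>* R S" using lower_mono_star v(3) by blast
    qed
    have ad: "card (fst a) + 1 \<le> d" using a(3) by simp
    have "(link_adj X m g a)\<^sup>*\<^sup>* u w" using lc a(1) ad lu unfolding link_connected_def by blast
    then have "\<forall>S. MC S \<and> card (fst S) = d + 1 \<and> CT w S \<longrightarrow> (lower_adj d X m g a)\<^sup>*\<^sup>* P S"
    proof (induction rule: rtranclp_induct)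
      case base
      then show ?case using IHu lu P u by blast
    next
      case (step v w')
      obtain e where e: "MC e" "card (fst e) = card (fst a) + 2" "CT a e" "CT v e" "CT w' e"
        using step(2) unfolding link_adj_def by blast
      obtain R where R: "MC R" "card (fst R) = d + 1" "CT e R"
        using pu e unfolding pure_def by blast
      have lw: "link_vertex X m g a w'" using step(2) unfolding link_adj_def by blast
      have 1: "(lower_adj d X m g a)\<^sup>*\<^sup>* P R" using step(3) R(1,2) ct_trans[OF e(4) R(3)] by blast
      show ?case
      proof (intro allI impI, elim conjE)
        fix S assume S: "MC S" "card (fst S) = d + 1" "CT w' S"
        have "(lower_adj d X m g a)\<^sup>*\<^sup>* R S" using IHu[OF lw R(1,2) ct_trans[OF e(5) R(3)] S] .
        then show "(lower_adj d X m g a)\<^sup>*\<^sup>* P S" using 1 by simp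
      qed
    qed
    then show "(lower_adj d X m g a)\<^sup>*\<^sup>* P Q" using Q w by blast
  qed
qed

lemma dir1:
  assumes "link_connected d X m g"
  shows "lower_path_connected_links d X m g"
  unfolding lower_path_connected_links_def using dir1_aux[OF assms] by auto

end

theorem proposition3:
  fixes d :: nat and X :: "'v set set" and m :: "'v set \<Rightarrow> nat"
    and g :: "'v set \<times> nat \<Rightarrow> 'v set \<Rightarrow> 'v set \<times> nat"
  assumes "multicomplex d X m g" and "pure d X m g"
  shows "link_connected d X m g \<longleftrightarrow> lower_path_connected_links d X m g"
proof -
  interpret mcx d X m g using assms by unfold_locales
  show ?thesis using dir1 dir2 by blast
qed

end
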